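(* Let $d_1$ be a positive integer, let $p_{10}<p_{11}<\cdots<p_{1d_1}$ and $p_{20}<p_{21}$ be real numbers (so $d_2=1$), and let $$S=\bigl\{(x_1,x_2,\mu)\in\mathbb{R}^2\times\mathbb{R} : \mu=x_1x_2,\ x_1\in\{p_{10},\dots,p_{1d_1}\},\ x_2\in\{p_{20},p_{21}\}\bigr\}.$$ Let $Q$ be the polyhedron of all $(x_1,x_2,\mu,\boldsymbol{z}_1,z_{21})\in\mathbb{R}^2\times\mathbb{R}\times\mathbb{R}^{d_1}\times\mathbb{R}$ satisfying $x_1=p_{10}+\sum_{j=1}^{d_1}(p_{1j}-p_{1,j-1})z_{1j}$, $1\ge z_{11}\ge\cdots\ge z_{1d_1}\ge 0$, $x_2=p_{20}+(p_{21}-p_{20})z_{21}$, $1\ge z_{21}\ge0$, and, for every $k\in\{0,1,\dots,d_1\}$, \begin{align*} \mu&\le p_{10}p_{20}+\textstyle\sum_{j=1}^{k}p_{20}(p_{1j}-p_{1,j-1})z_{1j}+p_{1k}(p_{21}-p_{20})z_{21}+\sum_{j=k+1}^{d_1}p_{21}(p_{1j}-p_{1,j-1})z_{1j},\\ \mu&\ge p_{10}p_{21}+\textstyle\sum_{j=1}^{k}p_{21}(p_{1j}-p_{1,j-1})z_{1j}+p_{1k}(p_{20}-p_{21})(1-z_{21})+\sum_{j=k+1}^{d_1}p_{20}(p_{1j}-p_{1,j-1})z_{1j}. \end{align*} Then $E=\{(x_1,x_2,\mu,\boldsymbol{z}_1,z_{21})\in Q:(\boldsymbol{z}_1,z_{21})\in\{0,1\}^{d_1+1}\}$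 is an ideal MIP formulation of $S$.
   Context: An MIP formulation of a set $S$ is a set $E=\{(\boldsymbol{x},\boldsymbol{y},\boldsymbol{z})\in Q:\boldsymbol{z}\in\{0,1\}^q\}$, $Q$ a polyhedron, whose projection onto the original variables $\boldsymbol{x}$ equals $S$. It is ideal if every vertex of the LP relaxation $Q$ has $\boldsymbol{z}\in\{0,1\}^q$. *)

theory Defs
  imports "HOL-Analysis.Analysis"
begin

text \<open>Points of R^2 x R x R^{d1} x R are represented as tuples
  (x1, x2, mu, z1, z21) where z1 :: nat => real carries the coordinates
  z1 1, ..., z1 d1 (all other coordinates of z1 are required to be 0 in Q).\<close>

type_synonym point = "real \<times> real \<times> real \<times> (nat \<Rightarrow> real) \<times> real"

definition comb :: "real \<Rightarrow> point \<Rightarrow> point \<Rightarrow> point" where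
  "comb t a b = (case a of (x1, x2, mu, z1, z21) \<Rightarrow> case b of (y1, y2, nu, w1, w21) \<Rightarrow>
     ((1 - t) * x1 + t * y1, (1 - t) * x2 + t * y2, (1 - t) * mu + t * nu,
      (\<lambda>j. (1 - t) * z1 j + t * w1 j), (1 - t) * z21 + t * w21))"

text \<open>Vertex (extreme point) of a set of points: not in the open segment between
  two distinct points of the set (this is what extreme_point_of unfolds to).\<close>
definition vertex_of :: "point \<Rightarrow> point set \<Rightarrow> bool" where
  "vertex_of v P \<longleftrightarrow> v \<in> P \<and>
     \<not> (\<exists>a\<in>P. \<exists>b\<in>P. \<exists>t. 0 < t \<and> t < 1 \<and> a \<noteq> b \<and> v = comb t a b)"

definition Qset :: "nat \<Rightarrow> (nat \<Rightarrow> real) \<Rightarrow> real \<Rightarrow> real \<Rightarrow> point set" where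
  "Qset d1 p1 p20 p21 = {(x1, x2, mu, z1, z21).
     (\<forall>j. (j = 0 \<or> j > d1) \<longrightarrow> z1 j = 0) \<and>
     x1 = p1 0 + (\<Sum>j=1..d1. (p1 j - p1 (j - 1)) * z1 j) \<and>
     z1 1 \<le> 1 \<and> (\<forall>j\<in>{1..<d1}. z1 j \<ge> z1 (j + 1)) \<and> z1 d1 \<ge> 0 \<and>
     x2 = p20 + (p21 - p20) * z21 \<and> z21 \<le> 1 \<and> z21 \<ge> 0 \<and>
     (\<forall>k\<in>{0..d1}.
        mu \<le> p1 0 * p20 + (\<Sum>j=1..k. p20 * (p1 j - p1 (j - 1)) * z1 j)
              + p1 k * (p21 - p20) * z21
              + (\<Sum>j=k+1..d1. p21 * (p1 j - p1 (j - 1)) * z1 j) \<and>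
        mu \<ge> p1 0 * p21 + (\<Sum>j=1..k. p21 * (p1 j - p1 (j - 1)) * z1 j)
              + p1 k * (p20 - p21) * (1 - z21)
              + (\<Sum>j=k+1..d1. p20 * (p1 j - p1 (j - 1)) * z1 j))}"

definition Sset :: "nat \<Rightarrow> (nat \<Rightarrow> real) \<Rightarrow> real \<Rightarrow> real \<Rightarrow> (real \<times> real \<times> real) set" where
  "Sset d1 p1 p20 p21 = {(x1, x2, mu). mu = x1 * x2 \<and> x1 \<in> p1 ` {0..d1} \<and> x2 \<in> {p20, p21}}"

definition binary_z :: "nat \<Rightarrow> point \<Rightarrow> bool" where
  "binary_z d1 v = (case v of (x1, x2, mu, z1, z21) \<Rightarrow>
     (\<forall>j\<in>{1..d1}. z1 j \<in> {0, 1}) \<and> z21 \<in> {0, 1})"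

definition MIP_set :: "nat \<Rightarrow> point set \<Rightarrow> point set" where
  "MIP_set d1 Q = {v \<in> Q. binary_z d1 v}"

definition proj_x :: "point \<Rightarrow> real \<times> real \<times> real" where
  "proj_x v = (case v of (x1, x2, mu, z1, z21) \<Rightarrow> (x1, x2, mu))"

definition is_MIP_formulation :: "(real \<times> real \<times> real) set \<Rightarrow> nat \<Rightarrow> point set \<Rightarrow> bool" where
  "is_MIP_formulation S d1 Q \<longleftrightarrow> proj_x ` MIP_set d1 Q = S"

definition is_ideal :: "nat \<Rightarrow> point set \<Rightarrow> bool" where
  "is_ideal d1 Q \<longleftrightarrow> (\<forall>v. vertex_of v Q \<longrightarrow> binary_z d1 v)"

end

theory Submission
  imports Defs
begin

definition Dl :: "(nat \<Rightarrow> real) \<Rightarrow> nat \<Rightarrow> real" where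
  "Dl p1 j = p1 j - p1 (j - 1)"
definition Tu :: "nat \<Rightarrow> (nat \<Rightarrow> real) \<Rightarrow> real \<Rightarrow> nat \<Rightarrow> real" where
  "Tu k z y j = (if j \<le> k then y else z j)"
definition Hl :: "nat \<Rightarrow> (nat \<Rightarrow> real) \<Rightarrow> real \<Rightarrow> nat \<Rightarrow> real" where
  "Hl k z y j = (if j \<le> k then z j + y - 1 else 0)"
definition Uf :: "nat \<Rightarrow> (nat \<Rightarrow> real) \<Rightarrow> real \<Rightarrow> real \<Rightarrow> nat \<Rightarrow> (nat \<Rightarrow> real) \<Rightarrow> real \<Rightarrow> real" where
  "Uf d p1 p20 p21 k z y = p20 * (p1 0 + (\<Sum>j=1..d. Dl p1 j * z j))
     + (p21 - p20) * (p1 0 * y + (\<Sum>j=1..d. Dl p1 j * Tu k z y j))"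
definition Lf :: "nat \<Rightarrow> (nat \<Rightarrow> real) \<Rightarrow> real \<Rightarrow> real \<Rightarrow> nat \<Rightarrow> (nat \<Rightarrow> real) \<Rightarrow> real \<Rightarrow> real" where
  "Lf d p1 p20 p21 k z y = p20 * (p1 0 + (\<Sum>j=1..d. Dl p1 j * z j))
     + (p21 - p20) * (p1 0 * y + (\<Sum>j=1..d. Dl p1 j * Hl k z y j))"

lemma tele: "(\<Sum>j=1..k. Dl p1 j) = p1 k - p1 0"
  by (induction k) (auto simp: Dl_def)

lemma sum_split: "(k::nat) \<le> d \<Longrightarrow> (\<Sum>j=1..d. f j) = (\<Sum>j=1..k. f j) + (\<Sum>j=k+1..d. (f j::real))"
proof -
  assume "k \<le> d"
  then have "{1..d} = {1..k} \<union> {k+1..d}" by (auto simp: set_eq_iff)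
  moreover have "sum f ({1..k} \<union> {k+1..d}) = sum f {1..k} + sum f {k+1..d}"
    by (rule sum.union_disjoint) auto
  ultimately show ?thesis by simp
qed

lemma upper_eq:
  assumes "k \<le> d"
  shows "p1 0 * p20 + (\<Sum>j=1..k. p20 * (p1 j - p1 (j - 1)) * z j)
              + p1 k * (p21 - p20) * y
              + (\<Sum>j=k+1..d. p21 * (p1 j - p1 (j - 1)) * z j) = Uf d p1 p20 p21 k z y"
proof -
  define S1 where "S1 = (\<Sum>j=1..k. Dl p1 j * z j)"
  define S2 where "S2 = (\<Sum>j=k+1..d. Dl p1 j * z j)"
  have a: "(\<Sum>j=1..d. Dl p1 j * z j) = S1 + S2" using sum_split[OF assms] S1_def S2_def by blast
  have b: "(\<Sum>j=1..d. Dl p1 j * Tu k z y j) = (\<Sum>j=1..k. Dl p1 j * Tu k z y j) + (\<Sum>j=k+1..d. Dl p1 j * Tu k z y j)"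
    using sum_split[OF assms] by blast
  have c: "(\<Sum>j=1..k. Dl p1 j * Tu k z y j) = (p1 k - p1 0) * y"
    by (simp add: Tu_def tele[symmetric] sum_distrib_right)
  have d: "(\<Sum>j=k+1..d. Dl p1 j * Tu k z y j) = S2"
    unfolding S2_def by (rule sum.cong) (auto simp: Tu_def)
  have e: "(\<Sum>j=1..k. p20 * (p1 j - p1 (j - 1)) * z j) = p20 * S1"
    by (simp add: S1_def Dl_def sum_distrib_left mult.assoc)
  have f: "(\<Sum>j=k+1..d. p21 * (p1 j - p1 (j - 1)) * z j) = p21 * S2"
    by (simp add: S2_def Dl_def sum_distrib_left mult.assoc)
  show ?thesis unfolding Uf_def a b c d e f by (simp add: algebra_simps)
qed

lemma lower_eq:
  assumes "k \<le> d"
  shows "p1 0 * p21 + (\<Sum>j=1..k. p21 * (p1 j - p1 (j - 1)) * z j)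
              + p1 k * (p20 - p21) * (1 - y)
              + (\<Sum>j=k+1..d. p20 * (p1 j - p1 (j - 1)) * z j) = Lf d p1 p20 p21 k z y"
proof -
  define S1 where "S1 = (\<Sum>j=1..k. Dl p1 j * z j)"
  define S2 where "S2 = (\<Sum>j=k+1..d. Dl p1 j * z j)"
  have a: "(\<Sum>j=1..d. Dl p1 j * z j) = S1 + S2" using sum_split[OF assms] S1_def S2_def by blast
  have b: "(\<Sum>j=1..d. Dl p1 j * Hl k z y j) = (\<Sum>j=1..k. Dl p1 j * Hl k z y j) + (\<Sum>j=k+1..d. Dl p1 j * Hl k z y j)"
    using sum_split[OF assms] by blast
  have c: "(\<Sum>j=1..k. Dl p1 j * Hl k z y j) = S1 + (p1 k - p1 0) * (y - 1)"
  proof -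
    have "(\<Sum>j=1..k. Dl p1 j * Hl k z y j) = (\<Sum>j=1..k. Dl p1 j * z j + Dl p1 j * (y - 1))"
      by (rule sum.cong) (auto simp: Hl_def algebra_simps)
    also have "\<dots> = S1 + (p1 k - p1 0) * (y - 1)"
      by (simp add: sum.distrib S1_def tele[symmetric] sum_distrib_right)
    finally show ?thesis .
  qed
  have d: "(\<Sum>j=k+1..d. Dl p1 j * Hl k z y j) = 0"
    by (rule sum.neutral) (auto simp: Hl_def)
  have e: "(\<Sum>j=1..k. p21 * (p1 j - p1 (j - 1)) * z j) = p21 * S1"
    by (simp add: S1_def Dl_def sum_distrib_left mult.assoc)
  have f: "(\<Sum>j=k+1..d. p20 * (p1 j - p1 (j - 1)) * z j) = p20 * S2"
    by (simp add: S2_def Dl_def sum_distrib_left mult.assoc)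
  show ?thesis unfolding Lf_def a b c d e f by (simp add: algebra_simps)
qed

lemma x1_eq: "p1 0 + (\<Sum>j=1..d. (p1 j - p1 (j - 1)) * z j) = p1 0 + (\<Sum>j=1..d. Dl p1 j * z j)"
  by (simp add: Dl_def)

lemma Q_iff:
  "(x1, x2, mu, z1, z21) \<in> Qset d p1 p20 p21 \<longleftrightarrow>
     (\<forall>j. (j = 0 \<or> j > d) \<longrightarrow> z1 j = 0) \<and>
     x1 = p1 0 + (\<Sum>j=1..d. Dl p1 j * z1 j) \<and>
     z1 1 \<le> 1 \<and> (\<forall>j\<in>{1..<d}. z1 j \<ge> z1 (j + 1)) \<and> z1 d \<ge> 0 \<and>
     x2 = p20 + (p21 - p20) * z21 \<and> z21 \<le> 1 \<and> z21 \<ge> 0 \<and>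
     (\<forall>k\<in>{0..d}. mu \<le> Uf d p1 p20 p21 k z1 z21 \<and> mu \<ge> Lf d p1 p20 p21 k z1 z21)"
  unfolding Qset_def using upper_eq lower_eq x1_eq
  by (simp add: Dl_def)

lemma chain_mono:
  fixes j d :: nat
  assumes ch: "\<forall>j\<in>{1..<d}. z (j + 1) \<le> (z j::real)" and "1 \<le> i" "i \<le> j" "j \<le> d"
  shows "z j \<le> z i"
  using assms(3,4)
proof (induction j rule: dec_induct)
  case base then show ?case by simp
next
  case (step n)
  then have "z (n+1) \<le> z n" using ch assms(2) by auto
  then show ?case using step by simp
qed

lemma chain_bounds:
  fixes j d :: nat
  assumes ch: "\<forall>j\<in>{1..<d}. z (j + 1) \<le> (z j::real)" and "z 1 \<le> 1" "z d \<ge> 0" "j \<in> {1..d}"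
  shows "0 \<le> z j \<and> z j \<le> 1"
  using chain_mono[OF ch, of 1 j] chain_mono[OF ch, of j d] assms by auto

lemma Dl_pos:
  assumes "\<And>j. j < d \<Longrightarrow> p1 j < p1 (Suc j)" "j \<in> {1..d}"
  shows "Dl p1 j > 0"
proof -
  obtain i where "j = Suc i" "i < d" using assms(2) by (cases j) auto
  then show ?thesis using assms(1) by (simp add: Dl_def)
qed

lemma L_le_U:
  assumes Dp: "\<And>j. j \<in> {1..d} \<Longrightarrow> Dl p1 j > 0" and "p20 < p21"
    and zb: "\<And>j. j \<in> {1..d} \<Longrightarrow> 0 \<le> z j \<and> z j \<le> 1" and "0 \<le> y" "y \<le> 1"
  shows "Lf d p1 p20 p21 k z y \<le> Uf d p1 p20 p21 k' z y"
proof -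
  have "(\<Sum>j=1..d. Dl p1 j * Hl k z y j) \<le> (\<Sum>j=1..d. Dl p1 j * Tu k' z y j)"
  proof (rule sum_mono)
    fix j assume j: "j \<in> {1..d}"
    have "Hl k z y j \<le> Tu k' z y j" using zb[OF j] assms(4,5) by (auto simp: Hl_def Tu_def)
    then show "Dl p1 j * Hl k z y j \<le> Dl p1 j * Tu k' z y j"
      using Dp[OF j] by (simp add: mult_left_mono)
  qed
  then show ?thesis unfolding Lf_def Uf_def using assms(2) by (simp add: mult_left_mono)
qed

lemma Uf_step:
  assumes "Suc k \<le> d"
  shows "Uf d p1 p20 p21 (Suc k) z y - Uf d p1 p20 p21 k z y = (p21 - p20) * Dl p1 (Suc k) * (y - z (Suc k))"
proof -
  have "(\<Sum>j=1..d. Dl p1 j * Tu (Suc k) z y j) - (\<Sum>j=1..d. Dl p1 j * Tu k z y j)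
      = (\<Sum>j=1..d. Dl p1 j * Tu (Suc k) z y j - Dl p1 j * Tu k z y j)"
    by (simp add: sum_subtractf)
  also have "\<dots> = (\<Sum>j=1..d. if j = Suc k then Dl p1 (Suc k) * (y - z (Suc k)) else 0)"
    by (rule sum.cong) (auto simp: Tu_def algebra_simps)
  also have "\<dots> = Dl p1 (Suc k) * (y - z (Suc k))" using assms by (simp add: sum.delta)
  finally have E: "(\<Sum>j=1..d. Dl p1 j * Tu (Suc k) z y j) = (\<Sum>j=1..d. Dl p1 j * Tu k z y j) + (Dl p1 (Suc k) * (y - z (Suc k)))"
    by simp
  show ?thesis unfolding Uf_def E by (simp add: algebra_simps)
qed

lemma Lf_step:
  assumes "Suc k \<le> d"
  shows "Lf d p1 p20 p21 (Suc k) z y - Lf d p1 p20 p21 k z y = (p21 - p20) * Dl p1 (Suc k) * (z (Suc k) + y - 1)"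
proof -
  have "(\<Sum>j=1..d. Dl p1 j * Hl (Suc k) z y j) - (\<Sum>j=1..d. Dl p1 j * Hl k z y j)
      = (\<Sum>j=1..d. Dl p1 j * Hl (Suc k) z y j - Dl p1 j * Hl k z y j)"
    by (simp add: sum_subtractf)
  also have "\<dots> = (\<Sum>j=1..d. if j = Suc k then Dl p1 (Suc k) * (z (Suc k) + y - 1) else 0)"
    by (rule sum.cong) (auto simp: Hl_def algebra_simps)
  also have "\<dots> = Dl p1 (Suc k) * (z (Suc k) + y - 1)" using assms by (simp add: sum.delta)
  finally have E: "(\<Sum>j=1..d. Dl p1 j * Hl (Suc k) z y j) = (\<Sum>j=1..d. Dl p1 j * Hl k z y j) + (Dl p1 (Suc k) * (z (Suc k) + y - 1))"
    by simp
  show ?thesis unfolding Lf_def E by (simp add: algebra_simps)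
qed

definition zm :: "nat \<Rightarrow> nat \<Rightarrow> real" where
  "zm m j = (if 1 \<le> j \<and> j \<le> m then 1 else 0)"

lemma zm_sum: "m \<le> d \<Longrightarrow> (\<Sum>j=1..d. Dl p1 j * zm m j) = p1 m - p1 0"
proof -
  assume md: "m \<le> d"
  have "(\<Sum>j=1..d. Dl p1 j * zm m j) = (\<Sum>j=1..m. Dl p1 j * zm m j) + (\<Sum>j=m+1..d. Dl p1 j * zm m j)"
    by (rule sum_split[OF md])
  also have "(\<Sum>j=1..m. Dl p1 j * zm m j) = (\<Sum>j=1..m. Dl p1 j)"
    by (rule sum.cong) (auto simp: zm_def)
  also have "(\<Sum>j=m+1..d. Dl p1 j * zm m j) = 0"
    by (rule sum.neutral) (auto simp: zm_def)
  finally show ?thesis using tele[of p1 m] by simp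
qed

lemma zm_U:
  assumes "m \<le> d" "0 \<le> y" "y \<le> 1" and Dp: "\<And>j. j \<in> {1..d} \<Longrightarrow> Dl p1 j > 0" and "p20 < p21"
  shows "Uf d p1 p20 p21 m (zm m) y = p1 m * (p20 + (p21 - p20) * y)"
    and "Uf d p1 p20 p21 k (zm m) y \<ge> p1 m * (p20 + (p21 - p20) * y)"
    and "Lf d p1 p20 p21 m (zm m) y = p1 m * (p20 + (p21 - p20) * y)"
    and "Lf d p1 p20 p21 k (zm m) y \<le> p1 m * (p20 + (p21 - p20) * y)"
proof -
  have base: "(\<Sum>j=1..d. Dl p1 j * (zm m j * y)) = (p1 m - p1 0) * y"
  proof -
    have "(\<Sum>j=1..d. Dl p1 j * (zm m j * y)) = (\<Sum>j=1..d. Dl p1 j * zm m j) * y"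
      by (simp add: sum_distrib_right mult.assoc)
    then show ?thesis using zm_sum[OF assms(1), of p1] by simp
  qed
  have e1: "(\<Sum>j=1..d. Dl p1 j * Tu m (zm m) y j) = (p1 m - p1 0) * y"
    unfolding base[symmetric] by (rule sum.cong) (auto simp: Tu_def zm_def)
  have e2: "(\<Sum>j=1..d. Dl p1 j * Hl m (zm m) y j) = (p1 m - p1 0) * y"
    unfolding base[symmetric] by (rule sum.cong) (auto simp: Hl_def zm_def)
  have i1: "(\<Sum>j=1..d. Dl p1 j * Tu k (zm m) y j) \<ge> (p1 m - p1 0) * y"
    unfolding base[symmetric]
  proof (rule sum_mono)
    fix j assume j: "j \<in> {1..d}"
    have "zm m j * y \<le> Tu k (zm m) y j" using assms(2,3) by (auto simp: Tu_def zm_def)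
    then show "Dl p1 j * (zm m j * y) \<le> Dl p1 j * Tu k (zm m) y j" using Dp[OF j] by (simp add: mult_left_mono)
  qed
  have i2: "(\<Sum>j=1..d. Dl p1 j * Hl k (zm m) y j) \<le> (p1 m - p1 0) * y"
    unfolding base[symmetric]
  proof (rule sum_mono)
    fix j assume j: "j \<in> {1..d}"
    have "Hl k (zm m) y j \<le> zm m j * y" using assms(2,3) by (auto simp: Hl_def zm_def)
    then show "Dl p1 j * Hl k (zm m) y j \<le> Dl p1 j * (zm m j * y)" using Dp[OF j] by (simp add: mult_left_mono)
  qed
  have zs: "(\<Sum>j=1..d. Dl p1 j * zm m j) = p1 m - p1 0" by (rule zm_sum[OF assms(1)])
  show "Uf d p1 p20 p21 m (zm m) y = p1 m * (p20 + (p21 - p20) * y)"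
    unfolding Uf_def zs e1 by (simp add: algebra_simps)
  show "Lf d p1 p20 p21 m (zm m) y = p1 m * (p20 + (p21 - p20) * y)"
    unfolding Lf_def zs e2 by (simp add: algebra_simps)
  have dp: "p21 - p20 > 0" using assms(5) by simp
  show "Uf d p1 p20 p21 k (zm m) y \<ge> p1 m * (p20 + (p21 - p20) * y)"
    using mult_left_mono[OF i1 less_imp_le[OF dp]] unfolding Uf_def zs by (simp add: algebra_simps)
  show "Lf d p1 p20 p21 k (zm m) y \<le> p1 m * (p20 + (p21 - p20) * y)"
    using mult_left_mono[OF i2 less_imp_le[OF dp]] unfolding Lf_def zs by (simp add: algebra_simps)
qed

lemma binary_chain:
  fixes d :: nat
  assumes out: "\<forall>j. (j = 0 \<or> j > d) \<longrightarrow> z j = 0"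
    and ch: "\<forall>j\<in>{1..<d}. z (j + 1) \<le> (z j::real)" and "z 1 \<le> 1" "z d \<ge> 0"
    and bin: "\<forall>j\<in>{1..d}. z j \<in> {0, 1}"
  shows "\<exists>m\<le>d. z = zm m"
proof -
  define M where "M = insert 0 {j\<in>{1..d}. z j = 1}"
  define m where "m = Max M"
  have fM: "finite M" "M \<noteq> {}" unfolding M_def by auto
  have md: "m \<le> d" unfolding m_def using fM by (subst Max_le_iff) (auto simp: M_def)
  have mM: "m \<in> M" unfolding m_def using fM by (rule Max_in)
  have "z j = zm m j" for j
  proof (cases "1 \<le> j \<and> j \<le> d")
    case False
    then have "j = 0 \<or> j > d" by auto
    then have "z j = 0" using out by blast
    then show ?thesis using False md by (auto simp: zm_def)
  next
    case True
    show ?thesis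
    proof (cases "j \<le> m")
      case jm: True
      then have "m \<ge> 1" using True by simp
      then have zm1: "z m = 1" using mM by (auto simp: M_def)
      have "z m \<le> z j" using chain_mono[OF ch, of j m] True jm md by simp
      moreover have "z j \<le> 1" using chain_bounds[OF ch assms(3,4), of j] True by simp
      ultimately show ?thesis using zm1 jm True by (simp add: zm_def)
    next
      case False
      then have "j \<notin> M" using fM unfolding m_def by (meson Max_ge not_le)
      then have "z j \<noteq> 1" using True by (auto simp: M_def)
      then show ?thesis using bin True False by (auto simp: zm_def)
    qed
  qed
  then show ?thesis using md by blast
qed

lemma mip_part:
  assumes inc: "\<And>j. j < d \<Longrightarrow> p1 j < p1 (Suc j)" and p2: "p20 < p21"
  shows "is_MIP_formulation (Sset d p1 p20 p21) d (Qset d p1 p20 p21)"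
  unfolding is_MIP_formulation_def
proof
  have Dp: "\<And>j. j \<in> {1..d} \<Longrightarrow> Dl p1 j > 0" using Dl_pos[of d p1] inc by blast
  show "proj_x ` MIP_set d (Qset d p1 p20 p21) \<subseteq> Sset d p1 p20 p21"
  proof
    fix w assume "w \<in> proj_x ` MIP_set d (Qset d p1 p20 p21)"
    then obtain x1 x2 mu z y where v: "(x1, x2, mu, z, y) \<in> Qset d p1 p20 p21" "binary_z d (x1, x2, mu, z, y)"
      and w: "w = (x1, x2, mu)"
      unfolding MIP_set_def proj_x_def by auto
    note q = v(1)[unfolded Q_iff]
    have bz: "\<forall>j\<in>{1..d}. z j \<in> {0, 1}" "y \<in> {0, 1}" using v(2) by (auto simp: binary_z_def)
    have ch: "\<forall>j\<in>{1..<d}. z (j + 1) \<le> z j" using q by auto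
    obtain m where m: "m \<le> d" "z = zm m"
      using binary_chain[of d z] q ch bz(1) by auto
    have y01: "0 \<le> y" "y \<le> 1" using q by auto
    have x1: "x1 = p1 m" using q m zm_sum[OF m(1), of p1] by simp
    have "mu \<le> Uf d p1 p20 p21 m z y" "mu \<ge> Lf d p1 p20 p21 m z y" using q m(1) by auto
    then have "mu = p1 m * (p20 + (p21 - p20) * y)"
      using zm_U(1,3)[OF m(1) y01 Dp p2] m(2) by auto
    moreover have "x2 = p20 + (p21 - p20) * y" using q by auto
    ultimately have "mu = x1 * x2" using x1 by simp
    moreover have "x2 \<in> {p20, p21}" using bz(2) q by auto
    moreover have "x1 \<in> p1 ` {0..d}" using x1 m(1) by auto
    ultimately show "w \<in> Sset d p1 p20 p21" unfolding w Sset_def by auto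
  qed
  show "Sset d p1 p20 p21 \<subseteq> proj_x ` MIP_set d (Qset d p1 p20 p21)"
  proof
    fix w assume "w \<in> Sset d p1 p20 p21"
    then obtain x1 x2 mu where w0: "w = (x1, x2, mu)" "mu = x1 * x2" "x1 \<in> p1 ` {0..d}" "x2 \<in> {p20, p21}"
      unfolding Sset_def by auto
    then obtain m where "x1 = p1 m" "m \<le> d" by auto
    then have w: "w = (x1, x2, mu)" "mu = x1 * x2" "x1 = p1 m" "m \<le> d" "x2 \<in> {p20, p21}" using w0 by auto
    have "\<exists>y::real. y \<in> {0, 1} \<and> x2 = p20 + (p21 - p20) * y"
    proof (cases "x2 = p20")
      case True then show ?thesis by (intro exI[of _ 0]) simp
    next
      case False then have "x2 = p21" using w(5) by simp
      then show ?thesis by (intro exI[of _ 1]) simp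
    qed
    then obtain y :: real where y: "y \<in> {0, 1}" "x2 = p20 + (p21 - p20) * y" by blast
    have y01: "0 \<le> y" "y \<le> 1" using y by auto
    have mu: "mu = p1 m * (p20 + (p21 - p20) * y)" using w y by simp
    have "(x1, x2, mu, zm m, y) \<in> Qset d p1 p20 p21"
      unfolding Q_iff
    proof (intro conjI)
      show "\<forall>j. j = 0 \<or> d < j \<longrightarrow> zm m j = 0" using w(4) by (auto simp: zm_def)
      show "x1 = p1 0 + (\<Sum>j = 1..d. Dl p1 j * zm m j)" using zm_sum[OF w(4), of p1] w(3) by simp
      show "zm m 1 \<le> 1" "\<forall>j\<in>{1..<d}. zm m (j + 1) \<le> zm m j" "0 \<le> zm m d" by (auto simp: zm_def)
      show "x2 = p20 + (p21 - p20) * y" "y \<le> 1" "0 \<le> y" using y y01 by auto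
      show "\<forall>k\<in>{0..d}. mu \<le> Uf d p1 p20 p21 k (zm m) y \<and> Lf d p1 p20 p21 k (zm m) y \<le> mu"
        using zm_U(2,4)[OF w(4) y01 Dp p2] mu by auto
    qed
    moreover have "binary_z d (x1, x2, mu, zm m, y)" using y by (auto simp: binary_z_def zm_def)
    ultimately show "w \<in> proj_x ` MIP_set d (Qset d p1 p20 p21)"
      unfolding MIP_set_def proj_x_def w(1) by (auto intro!: image_eqI[where x="(x1, x2, mu, zm m, y)"])
  qed
qed

definition ph :: "real \<Rightarrow> real \<Rightarrow> real \<Rightarrow> real" where
  "ph c s t = t + s * (if t = c then 1 else 0)"

lemma ph_fix: "c \<noteq> 0 \<Longrightarrow> ph c s 0 = 0" "c \<noteq> 1 \<Longrightarrow> ph c s 1 = 1"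
  by (auto simp: ph_def)

lemma perturb_eps:
  assumes "finite V" "0 \<in> V" "1 \<in> V"
  shows "\<exists>\<epsilon>>0. \<forall>a\<in>V. \<forall>b\<in>V. \<forall>s. a \<le> b \<and> \<bar>s\<bar> \<le> \<epsilon> \<longrightarrow> ph c s a \<le> ph c s b"
proof -
  define G where "G = (\<lambda>p. \<bar>fst p - snd p\<bar>) ` {p \<in> V \<times> V. fst p \<noteq> snd p}"
  have fG: "finite G" unfolding G_def using assms(1) by auto
  have "(0::real, 1::real) \<in> {p \<in> V \<times> V. fst p \<noteq> snd p}" using assms(2,3) by simp
  then have nG: "G \<noteq> {}" unfolding G_def by blast
  define \<epsilon> where "\<epsilon> = Min G"
  have pos: "\<epsilon> > 0" unfolding \<epsilon>_def using fG nG by (subst Min_gr_iff) (auto simp: G_def)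
  have le: "\<epsilon> \<le> b - a" if "a \<in> V" "b \<in> V" "a < b" for a b
  proof -
    have "\<bar>a - b\<bar> \<in> G" unfolding G_def using that by (auto intro!: image_eqI[where x="(a, b)"])
    then have "\<epsilon> \<le> \<bar>a - b\<bar>" unfolding \<epsilon>_def using fG by simp
    then show ?thesis using that by simp
  qed
  show ?thesis
  proof (intro exI[of _ \<epsilon>] conjI pos ballI allI impI)
    fix a b s assume ab: "a \<in> V" "b \<in> V" "a \<le> b \<and> \<bar>s\<bar> \<le> \<epsilon>"
    show "ph c s a \<le> ph c s b"
    proof (cases "a = b")
      case True then show ?thesis by simp
    next
      case False
      then have "\<epsilon> \<le> b - a" using le ab by simp
      then show ?thesis using ab False unfolding ph_def by (auto simp: abs_le_iff)
    qed
  qed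
qed

lemma sum_aff: "(\<Sum>j\<in>A. a j * (b j + s * c j)) = (\<Sum>j\<in>A. a j * b j) + s * (\<Sum>j\<in>A. a j * (c j::real))"
  by (simp add: algebra_simps sum.distrib sum_distrib_left)

lemma Uf_aff: "Uf d p1 p20 p21 k (\<lambda>j. z j + s * e j) (y + s * f)
   = Uf d p1 p20 p21 k z y + s * (Uf d p1 p20 p21 k e f - p20 * p1 0)"
proof -
  have t: "Tu k (\<lambda>j. z j + s * e j) (y + s * f) j = Tu k z y j + s * Tu k e f j" for j
    by (simp add: Tu_def)
  show ?thesis unfolding Uf_def t sum_aff by (simp add: algebra_simps)
qed

lemma Lf_aff: "\<exists>A. \<forall>s. Lf d p1 p20 p21 k (\<lambda>j. z j + s * e j) (y + s * f)
   = Lf d p1 p20 p21 k z y + s * A"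
proof -
  have t: "Hl k (\<lambda>j. z j + s * e j) (y + s * f) j = Hl k z y j + s * (if j \<le> k then e j + f else 0)" for j s
    by (simp add: Hl_def algebra_simps)
  show ?thesis unfolding Lf_def t sum_aff
    by (rule exI[of _ "p20 * (\<Sum>j=1..d. Dl p1 j * e j) + (p21 - p20) * (p1 0 * f + (\<Sum>j=1..d. Dl p1 j * (if j \<le> k then e j + f else 0)))"])
      (simp add: algebra_simps)
qed

lemma comb_mid:
  assumes "(e::real) > 0"
  shows "comb (1/2) (x1 + (-e) * a1, x2 + (-e) * a2, mu + (-e) * a3, \<lambda>j. z j + (-e) * g j, y + (-e) * f)
                   (x1 + e * a1, x2 + e * a2, mu + e * a3, \<lambda>j. z j + e * g j, y + e * f)
         = (x1, x2, mu, z, y)"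
  unfolding comb_def by (simp add: fun_eq_iff field_simps)

lemma Uf_min:
  assumes Dp: "\<And>j. j \<in> {1..d} \<Longrightarrow> Dl p1 j > 0" and "p20 < p21"
    and sg: "\<And>j. j \<in> {1..d} \<Longrightarrow> (j \<le> k0 \<longrightarrow> y \<le> z j) \<and> (k0 < j \<longrightarrow> z j \<le> y)"
  shows "Uf d p1 p20 p21 k0 z y \<le> Uf d p1 p20 p21 k z y"
proof -
  have "(\<Sum>j=1..d. Dl p1 j * Tu k0 z y j) \<le> (\<Sum>j=1..d. Dl p1 j * Tu k z y j)"
  proof (rule sum_mono)
    fix j assume j: "j \<in> {1..d}"
    have "Tu k0 z y j \<le> Tu k z y j" using sg[OF j] by (auto simp: Tu_def)
    then show "Dl p1 j * Tu k0 z y j \<le> Dl p1 j * Tu k z y j" using Dp[OF j] by (simp add: mult_left_mono)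
  qed
  then show ?thesis unfolding Uf_def using assms(2) by (simp add: mult_left_mono)
qed

lemma Lf_max:
  assumes Dp: "\<And>j. j \<in> {1..d} \<Longrightarrow> Dl p1 j > 0" and "p20 < p21"
    and sg: "\<And>j. j \<in> {1..d} \<Longrightarrow> (j \<le> k0 \<longrightarrow> 1 - y \<le> z j) \<and> (k0 < j \<longrightarrow> z j \<le> 1 - y)"
  shows "Lf d p1 p20 p21 k z y \<le> Lf d p1 p20 p21 k0 z y"
proof -
  have "(\<Sum>j=1..d. Dl p1 j * Hl k z y j) \<le> (\<Sum>j=1..d. Dl p1 j * Hl k0 z y j)"
  proof (rule sum_mono)
    fix j assume j: "j \<in> {1..d}"
    have "Hl k z y j \<le> Hl k0 z y j" using sg[OF j] by (auto simp: Hl_def)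
    then show "Dl p1 j * Hl k z y j \<le> Dl p1 j * Hl k0 z y j" using Dp[OF j] by (simp add: mult_left_mono)
  qed
  then show ?thesis unfolding Lf_def using assms(2) by (simp add: mult_left_mono)
qed

lemma pos_prod_le0:
  assumes "(a::real) > 0" "b > 0" "a * b * x \<le> 0" shows "x \<le> 0"
proof (rule ccontr)
  assume "\<not> x \<le> 0"
  then have "a * b * x > 0" using assms(1,2) by simp
  then show False using assms(3) by simp
qed

lemma pos_prod_ge0:
  assumes "(a::real) > 0" "b > 0" "a * b * x \<ge> 0" shows "x \<ge> 0"
proof (rule ccontr)
  assume "\<not> x \<ge> 0"
  then have "a * b * x < 0" using assms(1,2) by (simp add: mult_pos_neg)
  then show False using assms(3) by simp
qed

lemma Uf_min_sign:
  fixes d k0 :: nat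
  assumes Dp: "\<And>j. j \<in> {1..d} \<Longrightarrow> Dl p1 j > 0" and p2: "p20 < p21"
    and ch: "\<forall>j\<in>{1..<d}. z (j + 1) \<le> z j" and k0: "k0 \<le> d"
    and mn: "\<And>k. k \<in> {0..d} \<Longrightarrow> Uf d p1 p20 p21 k0 z y \<le> Uf d p1 p20 p21 k z y"
    and j: "j \<in> {1..d}"
  shows "(j \<le> k0 \<longrightarrow> y \<le> z j) \<and> (k0 < j \<longrightarrow> z j \<le> y)"
proof (intro conjI impI)
  assume jk: "j \<le> k0"
  then obtain k' where k': "k0 = Suc k'" using j by (cases k0) auto
  have kk: "k' \<in> {0..d}" "Suc k' \<le> d" using k' k0 by auto
  have "Uf d p1 p20 p21 (Suc k') z y - Uf d p1 p20 p21 k' z y \<le> 0" using mn[OF kk(1)] unfolding k' by linarith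
  then have P: "(p21 - p20) * Dl p1 k0 * (y - z k0) \<le> 0" using Uf_step[OF kk(2), of p1 p20 p21 z y] unfolding k' by linarith
  have "y - z k0 \<le> 0" by (rule pos_prod_le0[OF _ _ P]) (use Dp[of k0] k0 k' p2 in auto)
  moreover have "z k0 \<le> z j" using chain_mono[OF ch, of j k0] jk j k0 by auto
  ultimately show "y \<le> z j" by simp
next
  assume jk: "k0 < j"
  have kk: "Suc k0 \<in> {0..d}" "Suc k0 \<le> d" using jk j by auto
  have "Uf d p1 p20 p21 (Suc k0) z y - Uf d p1 p20 p21 k0 z y \<ge> 0" using mn[OF kk(1)] by linarith
  then have P: "(p21 - p20) * Dl p1 (Suc k0) * (y - z (Suc k0)) \<ge> 0" using Uf_step[OF kk(2), of p1 p20 p21 z y] by linarith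
  have "y - z (Suc k0) \<ge> 0" by (rule pos_prod_ge0[OF _ _ P]) (use Dp[of "Suc k0"] jk j p2 in auto)
  moreover have "z j \<le> z (Suc k0)" using chain_mono[OF ch, of "Suc k0" j] jk j by auto
  ultimately show "z j \<le> y" by simp
qed

lemma Lf_max_sign:
  fixes d k0 :: nat
  assumes Dp: "\<And>j. j \<in> {1..d} \<Longrightarrow> Dl p1 j > 0" and p2: "p20 < p21"
    and ch: "\<forall>j\<in>{1..<d}. z (j + 1) \<le> z j" and k0: "k0 \<le> d"
    and mx: "\<And>k. k \<in> {0..d} \<Longrightarrow> Lf d p1 p20 p21 k z y \<le> Lf d p1 p20 p21 k0 z y"
    and j: "j \<in> {1..d}"
  shows "(j \<le> k0 \<longrightarrow> 1 - y \<le> z j) \<and> (k0 < j \<longrightarrow> z j \<le> 1 - y)"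
proof (intro conjI impI)
  assume jk: "j \<le> k0"
  then obtain k' where k': "k0 = Suc k'" using j by (cases k0) auto
  have kk: "k' \<in> {0..d}" "Suc k' \<le> d" using k' k0 by auto
  have "Lf d p1 p20 p21 (Suc k') z y - Lf d p1 p20 p21 k' z y \<ge> 0" using mx[OF kk(1)] unfolding k' by linarith
  then have P: "(p21 - p20) * Dl p1 k0 * (z k0 + y - 1) \<ge> 0" using Lf_step[OF kk(2), of p1 p20 p21 z y] unfolding k' by linarith
  have "z k0 + y - 1 \<ge> 0" by (rule pos_prod_ge0[OF _ _ P]) (use Dp[of k0] k0 k' p2 in auto)
  moreover have "z k0 \<le> z j" using chain_mono[OF ch, of j k0] jk j k0 by auto
  ultimately show "1 - y \<le> z j" by simp
next
  assume jk: "k0 < j"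
  have kk: "Suc k0 \<in> {0..d}" "Suc k0 \<le> d" using jk j by auto
  have "Lf d p1 p20 p21 (Suc k0) z y - Lf d p1 p20 p21 k0 z y \<le> 0" using mx[OF kk(1)] by linarith
  then have P: "(p21 - p20) * Dl p1 (Suc k0) * (z (Suc k0) + y - 1) \<le> 0" using Lf_step[OF kk(2), of p1 p20 p21 z y] by linarith
  have "z (Suc k0) + y - 1 \<le> 0" by (rule pos_prod_le0[OF _ _ P]) (use Dp[of "Suc k0"] jk j p2 in auto)
  moreover have "z j \<le> z (Suc k0)" using chain_mono[OF ch, of "Suc k0" j] jk j by auto
  ultimately show "z j \<le> 1 - y" by simp
qed

lemma caseB:
  fixes d k0 :: nat
  assumes d1: "d \<ge> 1" and Dp: "\<And>j. j \<in> {1..d} \<Longrightarrow> Dl p1 j > 0" and p2: "p20 < p21"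
    and v: "(x1, x2, mu, z, y) \<in> Qset d p1 p20 p21"
    and nb: "\<not> binary_z d (x1, x2, mu, z, y)"
    and k0: "k0 \<le> d" "mu = Uf d p1 p20 p21 k0 z y"
  shows "\<exists>a\<in>Qset d p1 p20 p21. \<exists>b\<in>Qset d p1 p20 p21. a \<noteq> b \<and> (x1, x2, mu, z, y) = comb (1/2) a b"
proof -
  note q = v[unfolded Q_iff]
  have out: "\<forall>j. (j = 0 \<or> j > d) \<longrightarrow> z j = 0" and x1: "x1 = p1 0 + (\<Sum>j=1..d. Dl p1 j * z j)"
    and z1: "z 1 \<le> 1" and ch: "\<forall>j\<in>{1..<d}. z (j+1) \<le> z j" and zd: "z d \<ge> 0"
    and x2: "x2 = p20 + (p21 - p20) * y" and y1: "y \<le> 1" and y0: "y \<ge> 0"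
    and UL: "\<forall>k\<in>{0..d}. mu \<le> Uf d p1 p20 p21 k z y \<and> mu \<ge> Lf d p1 p20 p21 k z y"
    using q by auto
  have zb: "\<And>j. j \<in> {1..d} \<Longrightarrow> 0 \<le> z j \<and> z j \<le> 1" using chain_bounds[OF ch z1 zd] by blast
  have sg: "\<And>j. j \<in> {1..d} \<Longrightarrow> (j \<le> k0 \<longrightarrow> y \<le> z j) \<and> (k0 < j \<longrightarrow> z j \<le> y)"
    using Uf_min_sign[OF Dp p2 ch k0(1)] UL k0(2) by auto
  obtain c where c: "c \<noteq> 0" "c \<noteq> 1" "c = y \<or> (\<exists>j\<in>{1..d}. z j = c)"
    using nb by (auto simp: binary_z_def)
  define V where "V = insert 0 (insert 1 (insert y (z ` {1..d})))"
  obtain \<epsilon> where ep: "\<epsilon> > 0" and mono: "\<forall>a\<in>V. \<forall>b\<in>V. \<forall>s. a \<le> b \<and> \<bar>s\<bar> \<le> \<epsilon> \<longrightarrow> ph c s a \<le> ph c s b"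
    using perturb_eps[of V c] by (auto simp: V_def)
  define e where "e j = (if z j = c then 1 else (0::real))" for j
  define f where "f = (if y = c then 1 else (0::real))"
  define P where "P s = (x1 + s * (\<Sum>j=1..d. Dl p1 j * e j), x2 + s * ((p21 - p20) * f),
     mu + s * (Uf d p1 p20 p21 k0 e f - p20 * p1 0), \<lambda>j. z j + s * e j, y + s * f)" for s
  have phz: "z j + s * e j = ph c s (z j)" for j s by (simp add: e_def ph_def)
  have phy: "y + s * f = ph c s y" for s by (simp add: f_def ph_def)
  have M: "ph c s a \<le> ph c s b" if "a \<in> V" "b \<in> V" "a \<le> b" "\<bar>s\<bar> \<le> \<epsilon>" for a b s using mono that by blast
  have inV: "0 \<in> V" "1 \<in> V" "y \<in> V" "\<And>j. j \<in> {1..d} \<Longrightarrow> z j \<in> V" by (auto simp: V_def)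
  have f0: "ph c s 0 = 0" "ph c s 1 = 1" for s using ph_fix c(1,2) by auto
  have mem: "P s \<in> Qset d p1 p20 p21" if s: "\<bar>s\<bar> \<le> \<epsilon>" for s
  proof -
    have Zb: "0 \<le> z j + s * e j \<and> z j + s * e j \<le> 1" if j: "j \<in> {1..d}" for j
      using M[OF inV(1) inV(4)[OF j] _ s] M[OF inV(4)[OF j] inV(2) _ s] zb[OF j] f0 phz by metis
    have Yb: "0 \<le> y + s * f \<and> y + s * f \<le> 1"
      using M[OF inV(1) inV(3) _ s] M[OF inV(3) inV(2) _ s] y0 y1 f0 phy by metis
    have sg': "(j \<le> k0 \<longrightarrow> y + s * f \<le> z j + s * e j) \<and> (k0 < j \<longrightarrow> z j + s * e j \<le> y + s * f)"
      if j: "j \<in> {1..d}" for j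
      using M[OF inV(3) inV(4)[OF j] _ s] M[OF inV(4)[OF j] inV(3) _ s] sg[OF j] phz phy by metis
    have mu': "mu + s * (Uf d p1 p20 p21 k0 e f - p20 * p1 0) = Uf d p1 p20 p21 k0 (\<lambda>j. z j + s * e j) (y + s * f)"
      using Uf_aff k0(2) by simp
    show ?thesis unfolding P_def Q_iff
    proof (intro conjI ballI allI impI)
      fix j :: nat assume "j = 0 \<or> d < j"
      then have "z j = 0" using out by blast
      then show "z j + s * e j = 0" using c(1) by (simp add: e_def)
    next
      show "x1 + s * (\<Sum>j = 1..d. Dl p1 j * e j) = p1 0 + (\<Sum>j = 1..d. Dl p1 j * (z j + s * e j))"
        unfolding sum_aff x1 by simp
    next
      show "z 1 + s * e 1 \<le> 1" using Zb[of 1] d1 by simp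
    next
      fix j assume j: "j \<in> {1..<d}"
      then have "z (j + 1) \<le> z j" using ch by blast
      then show "z (j + 1) + s * e (j + 1) \<le> z j + s * e j"
        using M[OF inV(4) inV(4) _ s, of "j+1" j] j phz by auto
    next
      show "0 \<le> z d + s * e d" using Zb[of d] d1 by simp
    next
      show "x2 + s * ((p21 - p20) * f) = p20 + (p21 - p20) * (y + s * f)" using x2 by (simp add: algebra_simps)
    next
      show "y + s * f \<le> 1" "0 \<le> y + s * f" using Yb by auto
    next
      fix k assume k: "k \<in> {0..d}"
      show "mu + s * (Uf d p1 p20 p21 k0 e f - p20 * p1 0) \<le> Uf d p1 p20 p21 k (\<lambda>j. z j + s * e j) (y + s * f)"
        unfolding mu' by (rule Uf_min[OF Dp p2 sg'])
      show "Lf d p1 p20 p21 k (\<lambda>j. z j + s * e j) (y + s * f) \<le> mu + s * (Uf d p1 p20 p21 k0 e f - p20 * p1 0)"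
        unfolding mu' using Yb by (intro L_le_U[OF Dp p2 Zb]) auto
    qed
  qed
  have ne: "P (-\<epsilon>) \<noteq> P \<epsilon>"
  proof
    assume eq: "P (-\<epsilon>) = P \<epsilon>"
    then have "y + (-\<epsilon>) * f = y + \<epsilon> * f" "\<And>j. z j + (-\<epsilon>) * e j = z j + \<epsilon> * e j"
      unfolding P_def by (auto simp: fun_eq_iff)
    then have f0: "f = 0" and e0: "\<And>j. e j = 0" using ep by auto
    show False
    proof (cases "c = y")
      case True then show False using f0 by (simp add: f_def)
    next
      case False
      then obtain j where "z j = c" using c(3) by auto
      then show False using e0[of j] by (simp add: e_def)
    qed
  qed
  have "comb (1/2) (P (-\<epsilon>)) (P \<epsilon>) = (x1, x2, mu, z, y)"
    unfolding P_def by (rule comb_mid[OF ep])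
  moreover have "\<bar>-\<epsilon>\<bar> \<le> \<epsilon>" "\<bar>\<epsilon>\<bar> \<le> \<epsilon>" using ep by auto
  ultimately show ?thesis using mem ne by metis
qed

lemma caseC:
  fixes d k0 :: nat
  assumes d1: "d \<ge> 1" and Dp: "\<And>j. j \<in> {1..d} \<Longrightarrow> Dl p1 j > 0" and p2: "p20 < p21"
    and v: "(x1, x2, mu, z, y) \<in> Qset d p1 p20 p21"
    and nb: "\<not> binary_z d (x1, x2, mu, z, y)"
    and k0: "k0 \<le> d" "mu = Lf d p1 p20 p21 k0 z y"
  shows "\<exists>a\<in>Qset d p1 p20 p21. \<exists>b\<in>Qset d p1 p20 p21. a \<noteq> b \<and> (x1, x2, mu, z, y) = comb (1/2) a b"
proof -
  note q = v[unfolded Q_iff]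
  have out: "\<forall>j. (j = 0 \<or> j > d) \<longrightarrow> z j = 0" and x1: "x1 = p1 0 + (\<Sum>j=1..d. Dl p1 j * z j)"
    and z1: "z 1 \<le> 1" and ch: "\<forall>j\<in>{1..<d}. z (j+1) \<le> z j" and zd: "z d \<ge> 0"
    and x2: "x2 = p20 + (p21 - p20) * y" and y1: "y \<le> 1" and y0: "y \<ge> 0"
    and UL: "\<forall>k\<in>{0..d}. mu \<le> Uf d p1 p20 p21 k z y \<and> mu \<ge> Lf d p1 p20 p21 k z y"
    using q by auto
  have zb: "\<And>j. j \<in> {1..d} \<Longrightarrow> 0 \<le> z j \<and> z j \<le> 1" using chain_bounds[OF ch z1 zd] by blast
  have sg: "\<And>j. j \<in> {1..d} \<Longrightarrow> (j \<le> k0 \<longrightarrow> 1 - y \<le> z j) \<and> (k0 < j \<longrightarrow> z j \<le> 1 - y)"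
    using Lf_max_sign[OF Dp p2 ch k0(1)] UL k0(2) by auto
  have "\<exists>c. c \<noteq> 0 \<and> c \<noteq> 1 \<and> (c = 1 - y \<or> (\<exists>j\<in>{1..d}. z j = c))"
  proof (cases "y \<in> {0, 1}")
    case True
    then obtain j where "j \<in> {1..d}" "z j \<notin> {0, 1}" using nb by (auto simp: binary_z_def)
    then show ?thesis by blast
  next
    case False then show ?thesis by (intro exI[of _ "1 - y"]) auto
  qed
  then obtain c where c: "c \<noteq> 0" "c \<noteq> 1" "c = 1 - y \<or> (\<exists>j\<in>{1..d}. z j = c)" by blast
  define V where "V = insert 0 (insert 1 (insert (1 - y) (z ` {1..d})))"
  obtain \<epsilon> where ep: "\<epsilon> > 0" and mono: "\<forall>a\<in>V. \<forall>b\<in>V. \<forall>s. a \<le> b \<and> \<bar>s\<bar> \<le> \<epsilon> \<longrightarrow> ph c s a \<le> ph c s b"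
    using perturb_eps[of V c] by (auto simp: V_def)
  define e where "e j = (if z j = c then 1 else (0::real))" for j
  define f where "f = - (if 1 - y = c then 1 else (0::real))"
  obtain A where A: "\<And>s. Lf d p1 p20 p21 k0 (\<lambda>j. z j + s * e j) (y + s * f) = Lf d p1 p20 p21 k0 z y + s * A"
    using Lf_aff by blast
  define P where "P s = (x1 + s * (\<Sum>j=1..d. Dl p1 j * e j), x2 + s * ((p21 - p20) * f),
     mu + s * A, \<lambda>j. z j + s * e j, y + s * f)" for s
  have phz: "z j + s * e j = ph c s (z j)" for j s by (simp add: e_def ph_def)
  have phy: "1 - (y + s * f) = ph c s (1 - y)" for s by (simp add: f_def ph_def)
  have M: "ph c s a \<le> ph c s b" if "a \<in> V" "b \<in> V" "a \<le> b" "\<bar>s\<bar> \<le> \<epsilon>" for a b s using mono that by blast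
  have inV: "0 \<in> V" "1 \<in> V" "1 - y \<in> V" "\<And>j. j \<in> {1..d} \<Longrightarrow> z j \<in> V" by (auto simp: V_def)
  have f0: "ph c s 0 = 0" "ph c s 1 = 1" for s using ph_fix c(1,2) by auto
  have mem: "P s \<in> Qset d p1 p20 p21" if s: "\<bar>s\<bar> \<le> \<epsilon>" for s
  proof -
    have Zb: "0 \<le> z j + s * e j \<and> z j + s * e j \<le> 1" if j: "j \<in> {1..d}" for j
      using M[OF inV(1) inV(4)[OF j] _ s] M[OF inV(4)[OF j] inV(2) _ s] zb[OF j] f0 phz by metis
    have Yb: "0 \<le> y + s * f \<and> y + s * f \<le> 1"
    proof -
      have "0 \<le> ph c s (1 - y)" "ph c s (1 - y) \<le> 1"
        using M[OF inV(1) inV(3) _ s] M[OF inV(3) inV(2) _ s] y0 y1 f0 by auto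
      then show ?thesis using phy[of s] by linarith
    qed
    have sg': "(j \<le> k0 \<longrightarrow> 1 - (y + s * f) \<le> z j + s * e j) \<and> (k0 < j \<longrightarrow> z j + s * e j \<le> 1 - (y + s * f))"
      if j: "j \<in> {1..d}" for j
      using M[OF inV(3) inV(4)[OF j] _ s] M[OF inV(4)[OF j] inV(3) _ s] sg[OF j] phz phy by metis
    have mu': "mu + s * A = Lf d p1 p20 p21 k0 (\<lambda>j. z j + s * e j) (y + s * f)"
      using A k0(2) by simp
    show ?thesis unfolding P_def Q_iff
    proof (intro conjI ballI allI impI)
      fix j :: nat assume "j = 0 \<or> d < j"
      then have "z j = 0" using out by blast
      then show "z j + s * e j = 0" using c(1) by (simp add: e_def)
    next
      show "x1 + s * (\<Sum>j = 1..d. Dl p1 j * e j) = p1 0 + (\<Sum>j = 1..d. Dl p1 j * (z j + s * e j))"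
        unfolding sum_aff x1 by simp
    next
      show "z 1 + s * e 1 \<le> 1" using Zb[of 1] d1 by simp
    next
      fix j assume j: "j \<in> {1..<d}"
      then have "z (j + 1) \<le> z j" using ch by blast
      then show "z (j + 1) + s * e (j + 1) \<le> z j + s * e j"
        using M[OF inV(4) inV(4) _ s, of "j+1" j] j phz by auto
    next
      show "0 \<le> z d + s * e d" using Zb[of d] d1 by simp
    next
      show "x2 + s * ((p21 - p20) * f) = p20 + (p21 - p20) * (y + s * f)" using x2 by (simp add: algebra_simps)
    next
      show "y + s * f \<le> 1" "0 \<le> y + s * f" using Yb by auto
    next
      fix k assume k: "k \<in> {0..d}"
      show "mu + s * A \<le> Uf d p1 p20 p21 k (\<lambda>j. z j + s * e j) (y + s * f)"
        unfolding mu' using Yb by (intro L_le_U[OF Dp p2 Zb]) auto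
      show "Lf d p1 p20 p21 k (\<lambda>j. z j + s * e j) (y + s * f) \<le> mu + s * A"
        unfolding mu' by (rule Lf_max[OF Dp p2 sg'])
    qed
  qed
  have ne: "P (-\<epsilon>) \<noteq> P \<epsilon>"
  proof
    assume eq: "P (-\<epsilon>) = P \<epsilon>"
    then have "y + (-\<epsilon>) * f = y + \<epsilon> * f" "\<And>j. z j + (-\<epsilon>) * e j = z j + \<epsilon> * e j"
      unfolding P_def by (auto simp: fun_eq_iff)
    then have f0: "f = 0" and e0: "\<And>j. e j = 0" using ep by auto
    show False
    proof (cases "c = 1 - y")
      case True then show False using f0 by (simp add: f_def)
    next
      case False
      then obtain j where "z j = c" using c(3) by auto
      then show False using e0[of j] by (simp add: e_def)
    qed
  qed
  have "comb (1/2) (P (-\<epsilon>)) (P \<epsilon>) = (x1, x2, mu, z, y)"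
    unfolding P_def by (rule comb_mid[OF ep])
  moreover have "\<bar>-\<epsilon>\<bar> \<le> \<epsilon>" "\<bar>\<epsilon>\<bar> \<le> \<epsilon>" using ep by auto
  ultimately show ?thesis using mem ne by metis
qed

lemma caseA:
  fixes d :: nat
  assumes v: "(x1, x2, mu, z, y) \<in> Qset d p1 p20 p21"
    and st: "\<forall>k\<in>{0..d}. mu < Uf d p1 p20 p21 k z y \<and> mu > Lf d p1 p20 p21 k z y"
  shows "\<exists>a\<in>Qset d p1 p20 p21. \<exists>b\<in>Qset d p1 p20 p21. a \<noteq> b \<and> (x1, x2, mu, z, y) = comb (1/2) a b"
proof -
  note q = v[unfolded Q_iff]
  define G where "G = (\<lambda>k. Uf d p1 p20 p21 k z y - mu) ` {0..d} \<union> (\<lambda>k. mu - Lf d p1 p20 p21 k z y) ` {0..d}"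
  have fG: "finite G" "G \<noteq> {}" unfolding G_def by auto
  define \<epsilon> where "\<epsilon> = Min G"
  have ep: "\<epsilon> > 0" unfolding \<epsilon>_def using fG st by (subst Min_gr_iff) (auto simp: G_def)
  have le: "\<epsilon> \<le> Uf d p1 p20 p21 k z y - mu" "\<epsilon> \<le> mu - Lf d p1 p20 p21 k z y" if "k \<in> {0..d}" for k
    unfolding \<epsilon>_def using fG that by (auto simp: G_def)
  define P where "P s = (x1 + s * 0, x2 + s * 0, mu + s * 1, \<lambda>j. z j + s * (0::real), y + s * 0)" for s :: real
  have mem: "P s \<in> Qset d p1 p20 p21" if s: "\<bar>s\<bar> \<le> \<epsilon>" for s
  proof -
    have "\<forall>k\<in>{0..d}. mu + s \<le> Uf d p1 p20 p21 k z y \<and> mu + s \<ge> Lf d p1 p20 p21 k z y"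
      using le s by (force simp: abs_le_iff)
    then show ?thesis unfolding P_def Q_iff using q by simp
  qed
  have ne: "P (-\<epsilon>) \<noteq> P \<epsilon>" using ep unfolding P_def by simp
  have "comb (1/2) (P (-\<epsilon>)) (P \<epsilon>) = (x1, x2, mu, z, y)"
    unfolding P_def by (rule comb_mid[OF ep])
  moreover have "\<bar>-\<epsilon>\<bar> \<le> \<epsilon>" "\<bar>\<epsilon>\<bar> \<le> \<epsilon>" using ep by auto
  ultimately show ?thesis using mem ne by metis
qed

lemma ideal_part:
  assumes d1: "d \<ge> 1" and inc: "\<And>j. j < d \<Longrightarrow> p1 j < p1 (Suc j)" and p2: "p20 < p21"
  shows "is_ideal d (Qset d p1 p20 p21)"
  unfolding is_ideal_def
proof (intro allI impI)
  have Dp: "\<And>j. j \<in> {1..d} \<Longrightarrow> Dl p1 j > 0" using Dl_pos[of d p1] inc by blast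
  fix v assume vx: "vertex_of v (Qset d p1 p20 p21)"
  obtain x1 x2 mu z y where vv: "v = (x1, x2, mu, z, y)" by (cases v) auto
  show "binary_z d v"
  proof (rule ccontr)
    assume nb: "\<not> binary_z d v"
    have vQ: "(x1, x2, mu, z, y) \<in> Qset d p1 p20 p21" using vx vv by (simp add: vertex_of_def)
    have UL: "\<forall>k\<in>{0..d}. mu \<le> Uf d p1 p20 p21 k z y \<and> mu \<ge> Lf d p1 p20 p21 k z y"
      using vQ[unfolded Q_iff] by blast
    have "\<exists>a\<in>Qset d p1 p20 p21. \<exists>b\<in>Qset d p1 p20 p21. a \<noteq> b \<and> (x1, x2, mu, z, y) = comb (1/2) a b"
    proof (cases "\<exists>k0\<in>{0..d}. mu = Uf d p1 p20 p21 k0 z y")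
      case True
      then obtain k0 where "k0 \<le> d" "mu = Uf d p1 p20 p21 k0 z y" by auto
      then show ?thesis using caseB[OF d1 Dp p2 vQ] nb vv by blast
    next
      case F1: False
      show ?thesis
      proof (cases "\<exists>k0\<in>{0..d}. mu = Lf d p1 p20 p21 k0 z y")
        case True
        then obtain k0 where "k0 \<le> d" "mu = Lf d p1 p20 p21 k0 z y" by auto
        then show ?thesis using caseC[OF d1 Dp p2 vQ] nb vv by blast
      next
        case False
        then have "\<forall>k\<in>{0..d}. mu < Uf d p1 p20 p21 k z y \<and> mu > Lf d p1 p20 p21 k z y"
          using F1 UL by force
        then show ?thesis using caseA[OF vQ] by blast
      qed
    qed
    then obtain a b where ab: "a \<in> Qset d p1 p20 p21" "b \<in> Qset d p1 p20 p21" "a \<noteq> b"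
      "(x1, x2, mu, z, y) = comb (1/2) a b" by blast
    have "(0::real) < 1/2" "(1::real)/2 < 1" by auto
    then show False using vx vv ab unfolding vertex_of_def by blast
  qed
qed

theorem proposition2:
  fixes d1 :: nat and p1 :: "nat \<Rightarrow> real" and p20 p21 :: real
  assumes "d1 \<ge> 1"
    and "\<And>j. j < d1 \<Longrightarrow> p1 j < p1 (Suc j)"
    and "p20 < p21"
  shows "is_MIP_formulation (Sset d1 p1 p20 p21) d1 (Qset d1 p1 p20 p21)
       \<and> is_ideal d1 (Qset d1 p1 p20 p21)"
  using mip_part[of d1 p1 p20 p21] ideal_part[of d1 p1 p20 p21] assms by blast

end
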